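(* Let $n\ge 2$ and let $k_1,\dots,k_n$, $a_1,\dots,a_{n-1}$, $b_1,\dots,b_n$ be real or complex numbers. Let $A_1$ be the $n\times n$ matrix with entries $$(A_1)_{ij}=\begin{cases} k_i b_j, & i\le j,\\ k_j a_j, & i>j.\end{cases}$$ Then $$\det(A_1)=k_1b_n\,(k_2b_1-k_1a_1)(k_3b_2-k_2a_2)\cdots(k_nb_{n-1}-k_{n-1}a_{n-1}).$$ In particular, $A_1$ is singular if $k_1=0$, or $b_n=0$, or $k_{i+1}b_i-k_ia_i=0$ for some $i\in\{1,\dots,n-1\}$. *)

theory Defs
  imports "Jordan_Normal_Form.Determinant"
begin

text \<open>The matrix A_1 of the paper, with 1-based parameter sequences k, a, b;
  entry (i,j) (0-based indices) corresponds to paper entry (i+1, j+1).\<close>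
definition A1 :: "nat \<Rightarrow> (nat \<Rightarrow> 'a::comm_ring_1) \<Rightarrow> (nat \<Rightarrow> 'a) \<Rightarrow> (nat \<Rightarrow> 'a) \<Rightarrow> 'a mat" where
  "A1 n k a b = mat n n (\<lambda>(i, j). if i + 1 \<le> j + 1 then k (i + 1) * b (j + 1) else k (j + 1) * a (j + 1))"

end

theory Submission imports Defs begin

definition G :: "nat \<Rightarrow> 'a::field \<Rightarrow> (nat \<Rightarrow> 'a) \<Rightarrow> (nat \<Rightarrow> 'a) \<Rightarrow> (nat \<Rightarrow> 'a) \<Rightarrow> 'a mat" where
  "G n t k a b = mat n n (\<lambda>(i, j). if i = 0 then t * b (j+1) else if i \<le> j then k (i + 1) * b (j + 1) else k (j + 1) * a (j + 1))"

lemma G_carrier: "G n t k a b \<in> carrier_mat n n" unfolding G_def by auto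

lemma G_zero: "det (G (Suc m) 0 k a b) = 0"
proof -
  let ?n = "Suc m"
  have "det (G ?n 0 k a b) = (\<Sum>j<?n. G ?n 0 k a b $$ (0,j) * cofactor (G ?n 0 k a b) 0 j)"
    by (rule laplace_expansion_row[OF G_carrier], simp)
  also have "\<dots> = 0" by (rule sum.neutral, auto simp: G_def)
  finally show ?thesis .
qed

lemma G_step:
  assumes t: "t \<noteq> 0"
  shows "det (G (Suc (Suc m)) t k a b) = (k 2 * b 1 - k 1 * a 1) * det (G (Suc m) t (k\<circ>Suc) (a\<circ>Suc) (b\<circ>Suc))"
proof -
  let ?n = "Suc (Suc m)"
  let ?A = "G ?n t k a b"
  let ?H = "addrow (- k 2 / t) 1 0 ?A"
  have Hc: "?H \<in> carrier_mat ?n ?n" using G_carrier by simp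
  have "det ?A = det ?H" by (rule det_addrow[symmetric, OF _ _ G_carrier], auto)
  also have "\<dots> = (\<Sum>j<?n. ?H $$ (1,j) * cofactor ?H 1 j)"
    by (rule laplace_expansion_row[OF Hc], simp)
  also have "\<dots> = ?H $$ (1,0) * cofactor ?H 1 0"
  proof -
    have "(\<Sum>j<?n. ?H $$ (1,j) * cofactor ?H 1 j) = (\<Sum>j\<in>{0}. ?H $$ (1,j) * cofactor ?H 1 j)"
      by (rule sum.mono_neutral_right, auto simp: G_def t numeral_2_eq_2)
    thus ?thesis by simp
  qed
  also have "?H $$ (1,0) = - (k 2 * b 1 - k 1 * a 1)"
    using t by (simp add: G_def field_simps)
  finally have 1: "det ?A = - (k 2 * b 1 - k 1 * a 1) * cofactor ?H 1 0" .
  have 2: "mat_delete ?H 1 0 = G (Suc m) t (k\<circ>Suc) (a\<circ>Suc) (b\<circ>Suc)"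
    by (rule eq_matI, auto simp: mat_delete_def G_def)
  show ?thesis using 1 2 by (simp add: cofactor_def algebra_simps)
qed

lemma G_det: "det (G (Suc m) t k a b) = t * b (Suc m) * (\<Prod>i=1..m. k (i+1) * b i - k i * a i)"
proof (cases "t = 0")
  case True thus ?thesis using G_zero by simp
next
  case t: False
  show ?thesis
  proof (induction m arbitrary: k a b)
    case 0
    show ?case by (simp add: G_def det_def)
  next
    case (Suc m)
    have "det (G (Suc (Suc m)) t k a b) = (k 2 * b 1 - k 1 * a 1) * det (G (Suc m) t (k\<circ>Suc) (a\<circ>Suc) (b\<circ>Suc))"
      by (rule G_step[OF t])
    also have "\<dots> = (k 2 * b 1 - k 1 * a 1) * (t * b (Suc (Suc m)) * (\<Prod>i=1..m. k (i+2) * b (i+1) - k (i+1) * a (i+1)))"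
      using Suc.IH[of "k\<circ>Suc" "a\<circ>Suc" "b\<circ>Suc"] by (simp add: comp_def)
    also have "(\<Prod>i=1..m. k (i+2) * b (i+1) - k (i+1) * a (i+1)) = (\<Prod>i=2..Suc m. k (i+1) * b i - k i * a i)"
      by (rule prod.reindex_bij_witness[where i="\<lambda>i. i - 1" and j="\<lambda>i. i+1"], auto simp: numeral_2_eq_2)
    also have "(\<Prod>i=1..Suc m. k (i+1) * b i - k i * a i) = (k 2 * b 1 - k 1 * a 1) * (\<Prod>i=2..Suc m. k (i+1) * b i - k i * a i)"
      by (subst prod.atLeast_Suc_atMost, auto simp: numeral_2_eq_2)
    ultimately show ?case by (simp add: ac_simps)
  qed
qed

theorem mainTheorem2:
  fixes k a b :: "nat \<Rightarrow> 'a::field"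
  assumes "n \<ge> 2"
  shows "det (A1 n k a b) = k 1 * b n * (\<Prod>i=1..n-1. k (i+1) * b i - k i * a i)
    \<and> ((k 1 = 0 \<or> b n = 0 \<or> (\<exists>i\<in>{1..n-1}. k (i+1) * b i - k i * a i = 0)) \<longrightarrow> det (A1 n k a b) = 0)"
proof -
  obtain m where n: "n = Suc m" using assms by (cases n) auto
  have "A1 n k a b = G n (k 1) k a b"
    by (rule eq_matI, auto simp: A1_def G_def)
  hence d: "det (A1 n k a b) = k 1 * b n * (\<Prod>i=1..n-1. k (i+1) * b i - k i * a i)"
    using G_det[of m "k 1" k a b] n by simp
  moreover have "(\<exists>i\<in>{1..n-1}. k (i+1) * b i - k i * a i = 0) \<Longrightarrow> (\<Prod>i=1..n-1. k (i+1) * b i - k i * a i) = 0"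
    by (rule prod_zero) auto
  ultimately show ?thesis by auto
qed

end
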